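(* Let $N\ge1$, and let $q,t$ be parameters. For $n\in\mathbb{Z}$ define the generalized Macdonald operator $$\mathcal M_{1,n}=\sum_{i=1}^{N}x_i^{\,n}\prod_{j\neq i}\frac{t x_i-x_j}{x_i-x_j}\,\Gamma_i,$$ where $(\Gamma_if)(x_1,\dots,x_N)=f(\dots,qx_i,\dots)$, and the current $\mathfrak e(z)=\frac{q^{1/2}}{1-q}\sum_{n\in\mathbb{Z}}q^{n/2}z^n\mathcal M_{1,n}$. Then, as formal series in $z^{\pm1},w^{\pm1}$ with operator coefficients, $$g(z,w)\,\mathfrak e(z)\mathfrak e(w)+g(w,z)\,\mathfrak e(w)\mathfrak e(z)=0,\qquad g(z,w)=(z-qw)(z-t^{-1}w)(z-q^{-1}tw).$$
   Context: The operators act on symmetric functions in $x_1,\dots,x_N$. This is the $\mathfrak e\mathfrak e$ exchange relation of the Ding–Iohara–Miki (quantum toroidal $\mathfrak{gl}_1$) algebra. *)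

theory Defs
  imports "HOL-Analysis.Analysis" "HOL-Computational_Algebra.Polynomial"
begin

text \<open>Functions of the variables x_1..x_N, indexed by a finite type 'n (N = CARD('n) >= 1).\<close>
type_synonym 'n fn = "('n \<Rightarrow> complex) \<Rightarrow> complex"

definition symmetric_fn :: "'n::finite fn \<Rightarrow> bool" where
  "symmetric_fn f \<longleftrightarrow> (\<forall>\<sigma> x. \<sigma> permutes (UNIV::'n set) \<longrightarrow> f (x \<circ> \<sigma>) = f x)"

definition Gam :: "complex \<Rightarrow> 'n \<Rightarrow> 'n fn \<Rightarrow> 'n fn" where
  "Gam q i f = (\<lambda>x. f (x(i := q * x i)))"

definition Mop :: "complex \<Rightarrow> complex \<Rightarrow> int \<Rightarrow> 'n::finite fn \<Rightarrow> 'n fn" where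
  "Mop q t n f = (\<lambda>x. \<Sum>i\<in>UNIV. x i powi n *
      (\<Prod>j\<in>UNIV - {i}. (t * x i - x j) / (x i - x j)) * Gam q i f x)"

text \<open>Coefficient of z^n in e(z); s plays the role of q^{1/2}, so q = s^2.\<close>
definition ecoef :: "complex \<Rightarrow> complex \<Rightarrow> int \<Rightarrow> 'n::finite fn \<Rightarrow> 'n fn" where
  "ecoef s t n f = (\<lambda>x. s / (1 - s^2) * s powi n * Mop (s^2) t n f x)"

text \<open>g(z,1) = (z - q)(z - t^{-1})(z - q^{-1} t); g(z,w) = sum_k coeff k * z^k w^(3-k).\<close>
definition gpoly :: "complex \<Rightarrow> complex \<Rightarrow> complex poly" where
  "gpoly q t = [:- q, 1:] * [:- inverse t, 1:] * [:- (t / q), 1:]"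

definition gcoef :: "complex \<Rightarrow> complex \<Rightarrow> int \<Rightarrow> int \<Rightarrow> complex" where
  "gcoef q t i j = (if 0 \<le> i \<and> 0 \<le> j \<and> i + j = 3 then coeff (gpoly q t) (nat i) else 0)"

definition generic_pt :: "complex \<Rightarrow> ('n \<Rightarrow> complex) \<Rightarrow> bool" where
  "generic_pt q x \<longleftrightarrow> (\<forall>i. x i \<noteq> 0) \<and> (\<forall>i j. i \<noteq> j \<longrightarrow> x i \<noteq> x j \<and> q * x i \<noteq> x j)"

end

theory Submission
  imports Defs
begin

lemma gp_coeffs:
  fixes al be ga :: complex
  shows
  "coeff ([:- al, 1:] * [:- be, 1:] * [:- ga, 1:]) 0 = - (al * be * ga)"
  "coeff ([:- al, 1:] * [:- be, 1:] * [:- ga, 1:]) (Suc 0) = al * be + al * ga + be * ga"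
  "coeff ([:- al, 1:] * [:- be, 1:] * [:- ga, 1:]) 2 = - (al + be + ga)"
  "coeff ([:- al, 1:] * [:- be, 1:] * [:- ga, 1:]) 3 = 1"
  by (simp_all add: algebra_simps coeff_mult_0 numeral_3_eq_3 numeral_2_eq_2 coeff_pCons)

definition Hf :: "complex \<Rightarrow> complex \<Rightarrow> complex \<Rightarrow> complex \<Rightarrow> complex \<Rightarrow> complex" where
  "Hf al be ga u v = (inverse u - al * inverse v) * (inverse u - be * inverse v) * (inverse u - ga * inverse v)"

lemma int03: "{0..3::int} = {0,1,2,3}" by auto

lemma powi_sub_nat: "(u::complex) \<noteq> 0 \<Longrightarrow> u powi (a - int k) = u powi a * inverse u ^ k"
  by (simp add: power_int_diff divide_inverse power_inverse)

definition gc :: "complex \<Rightarrow> complex \<Rightarrow> complex \<Rightarrow> int \<Rightarrow> int \<Rightarrow> complex" where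
  "gc al be ga i j = (if 0 \<le> i \<and> 0 \<le> j \<and> i + j = 3 then coeff ([:- al, 1:] * [:- be, 1:] * [:- ga, 1:]) (nat i) else 0)"

lemma gsum0:
  fixes u v al be ga :: complex and a b :: int
  assumes "u \<noteq> 0" "v \<noteq> 0"
  shows "(\<Sum>i\<in>{0..3}. \<Sum>j\<in>{0..3}. gc al be ga i j * (u powi (a - i) * v powi (b - j))
          + gc al be ga j i * (u powi (b - j) * v powi (a - i)))
       = (u powi a * v powi b + u powi b * v powi a) * Hf al be ga u v"
proof -
  have e: "\<And>w c. (w::complex) \<noteq> 0 \<Longrightarrow> w powi (c - 0) = w powi c * inverse w ^ 0"
     "\<And>w c. (w::complex) \<noteq> 0 \<Longrightarrow> w powi (c - 1) = w powi c * inverse w ^ 1"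
     "\<And>w c. (w::complex) \<noteq> 0 \<Longrightarrow> w powi (c - 2) = w powi c * inverse w ^ 2"
     "\<And>w c. (w::complex) \<noteq> 0 \<Longrightarrow> w powi (c - 3) = w powi c * inverse w ^ 3"
    using powi_sub_nat[of _ _ 0] powi_sub_nat[of _ _ 1] powi_sub_nat[of _ _ 2] powi_sub_nat[of _ _ 3]
    by simp_all
  show ?thesis
  using assms
  apply (simp only: int03)
  apply (simp add: gc_def e Hf_def numeral_3_eq_3 numeral_2_eq_2 del: power_int_diff)
  apply (simp add: algebra_simps power2_eq_square power3_eq_cube)
  done
qed

lemma gcoef_gc: "gcoef q t = gc q (inverse t) (t/q)"
  by (intro ext) (simp add: gcoef_def gc_def gpoly_def)

lemma Hf_eval:
  fixes X Y s t q :: complex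
  assumes "X \<noteq> 0" "Y \<noteq> 0" "s \<noteq> 0" "t \<noteq> 0" "q \<noteq> 0"
  shows "Hf q (inverse t) (t/q) (s*X) (s*Y) = (Y - q*X)*(t*Y - X)*(q*Y - t*X)/(s^3*X^3*Y^3*t*q)"
  using assms unfolding Hf_def by (simp add: field_simps) (simp add: algebra_simps power3_eq_cube)

lemma canc: "(c::complex) \<noteq> 0 \<Longrightarrow> A/B * (C/c) * (c*E*F/D) = A*C*E*F/(B*D)"
  by (simp add: divide_simps)

lemma scalar_key:
  fixes X Y s t q :: complex
  assumes "X \<noteq> 0" "Y \<noteq> 0" "X \<noteq> Y" "Y \<noteq> q * X" "X \<noteq> q * Y" "s \<noteq> 0" "t \<noteq> 0" "q = s^2"
  shows "(t * X - Y) / (X - Y) * ((t * Y - q * X) / (Y - q * X)) * Hf q (inverse t) (t/q) (s*X) (s*Y)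
       = - ((t * Y - X) / (Y - X) * ((t * X - q * Y) / (X - q * Y)) * Hf q (inverse t) (t/q) (s*Y) (s*X))"
proof -
  have q0: "q \<noteq> 0" using assms by simp
  have d1: "Y - q * X \<noteq> 0" "X - q * Y \<noteq> 0" using assms by auto
  have L: "(t * X - Y) / (X - Y) * ((t * Y - q * X) / (Y - q * X)) * Hf q (inverse t) (t/q) (s*X) (s*Y)
     = (t * X - Y) * (t * Y - q * X) * (t*Y - X) * (q*Y - t*X) / ((X - Y) * (s^3*X^3*Y^3*t*q))"
    unfolding Hf_eval[OF assms(1,2,6,7) q0] by (rule canc[OF d1(1)])
  have R: "(t * Y - X) / (Y - X) * ((t * X - q * Y) / (X - q * Y)) * Hf q (inverse t) (t/q) (s*Y) (s*X)
     = (t * Y - X) * (t * X - q * Y) * (t*X - Y) * (q*X - t*Y) / ((Y - X) * (s^3*Y^3*X^3*t*q))"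
    unfolding Hf_eval[OF assms(2,1,6,7) q0] by (rule canc[OF d1(2)])
  have e: "(Y - X) * (s^3*Y^3*X^3*t*q) = - ((X - Y) * (s^3*X^3*Y^3*t*q))" by (simp add: algebra_simps)
  have n: "(t * Y - X) * (t * X - q * Y) * (t*X - Y) * (q*X - t*Y) = (t * X - Y) * (t * Y - q * X) * (t*Y - X) * (q*Y - t*X)"
    by (simp add: algebra_simps)
  show ?thesis unfolding L R e n by (simp add: divide_simps)
qed

definition Aop :: "complex \<Rightarrow> ('n::finite \<Rightarrow> complex) \<Rightarrow> 'n \<Rightarrow> complex" where
  "Aop t x i = (\<Prod>j\<in>UNIV - {i}. (t * x i - x j) / (x i - x j))"

definition sh :: "complex \<Rightarrow> 'n \<Rightarrow> ('n \<Rightarrow> complex) \<Rightarrow> ('n \<Rightarrow> complex)" where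
  "sh q i x = x(i := q * x i)"

lemma Mop_eq: "Mop q t n f x = (\<Sum>i\<in>UNIV. x i powi n * Aop t x i * f (sh q i x))"
  by (simp add: Mop_def Gam_def Aop_def sh_def)

lemma step1:
  fixes s t :: complex and f :: "'n::finite fn"
  shows "ecoef s t m (ecoef s t n f) x =
    (\<Sum>p\<in>UNIV. \<Sum>r\<in>UNIV. ((s/(1-s^2))^2 * Aop t x p * Aop t (sh (s^2) p x) r * f (sh (s^2) r (sh (s^2) p x)))
        * ((s * x p) powi m * (s * sh (s^2) p x r) powi n))"
  apply (simp add: ecoef_def Mop_eq sum_distrib_left sum_distrib_right power_int_mult_distrib)
  apply (intro sum.cong refl)
  apply (simp add: power2_eq_square algebra_simps)
  done

lemma sum_antisym:
  fixes h :: "'a \<Rightarrow> 'a \<Rightarrow> complex"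
  assumes "\<And>p r. h p r = - h r p"
  shows "(\<Sum>p\<in>A. \<Sum>r\<in>A. h p r) = 0"
proof -
  have "(\<Sum>p\<in>A. \<Sum>r\<in>A. h p r) = (\<Sum>r\<in>A. \<Sum>p\<in>A. h p r)" by (rule sum.swap)
  also have "\<dots> = (\<Sum>r\<in>A. \<Sum>p\<in>A. - h r p)" by (intro sum.cong refl assms)
  also have "\<dots> = - (\<Sum>p\<in>A. \<Sum>r\<in>A. h p r)" by (simp add: sum_negf)
  finally have "2 * (\<Sum>p\<in>A. \<Sum>r\<in>A. h p r) = 0" by simp
  then show ?thesis by simp
qed

lemma sum4_swap:
  "(\<Sum>i\<in>I. \<Sum>j\<in>J. \<Sum>p\<in>P. \<Sum>r\<in>R. F i j p r) = (\<Sum>p\<in>P. \<Sum>r\<in>R. \<Sum>i\<in>I. \<Sum>j\<in>J. F i j p r)"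
proof -
  have "(\<Sum>i\<in>I. \<Sum>j\<in>J. \<Sum>p\<in>P. \<Sum>r\<in>R. F i j p r) = (\<Sum>i\<in>I. \<Sum>p\<in>P. \<Sum>j\<in>J. \<Sum>r\<in>R. F i j p r)"
    by (intro sum.cong refl sum.swap)
  also have "\<dots> = (\<Sum>i\<in>I. \<Sum>p\<in>P. \<Sum>r\<in>R. \<Sum>j\<in>J. F i j p r)"
    by (intro sum.cong refl sum.swap)
  also have "\<dots> = (\<Sum>p\<in>P. \<Sum>i\<in>I. \<Sum>r\<in>R. \<Sum>j\<in>J. F i j p r)"
    by (rule sum.swap)
  also have "\<dots> = (\<Sum>p\<in>P. \<Sum>r\<in>R. \<Sum>i\<in>I. \<Sum>j\<in>J. F i j p r)"
    by (intro sum.cong refl sum.swap)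
  finally show ?thesis .
qed

lemma Aop_split:
  assumes "p \<noteq> r"
  shows "Aop t x p = (t*x p - x r)/(x p - x r) * (\<Prod>j\<in>UNIV-{p,r}. (t*x p - x j)/(x p - x j))"
proof -
  have "Aop t x p = (t*x p - x r)/(x p - x r) * (\<Prod>j\<in>UNIV-{p}-{r}. (t*x p - x j)/(x p - x j))"
    unfolding Aop_def using assms by (subst prod.remove[of _ r]) auto
  moreover have "UNIV-{p}-{r} = UNIV-{p,r}" by blast
  ultimately show ?thesis by simp
qed

lemma Aop_sh_split:
  assumes "p \<noteq> r"
  shows "Aop t (sh q p x) r = (t*x r - q*x p)/(x r - q*x p) * (\<Prod>j\<in>UNIV-{p,r}. (t*x r - x j)/(x r - x j))"
proof -
  have "Aop t (sh q p x) r = (t*x r - q*x p)/(x r - q*x p) * (\<Prod>j\<in>UNIV-{r}-{p}. (t*(sh q p x) r - (sh q p x) j)/((sh q p x) r - (sh q p x) j))"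
    unfolding Aop_def using assms by (subst prod.remove[of _ p]) (auto simp: sh_def)
  moreover have "UNIV-{r}-{p} = UNIV-{p,r}" by blast
  moreover have "(\<Prod>j\<in>UNIV-{p,r}. (t*(sh q p x) r - (sh q p x) j)/((sh q p x) r - (sh q p x) j))
     = (\<Prod>j\<in>UNIV-{p,r}. (t*x r - x j)/(x r - x j))"
    using assms by (intro prod.cong refl) (auto simp: sh_def)
  ultimately show ?thesis by simp
qed

lemma pair_key:
  assumes "p \<noteq> r" "generic_pt q x" "s \<noteq> 0" "t \<noteq> 0" "q = s^2"
  shows "Aop t x p * Aop t (sh q p x) r * Hf q (inverse t) (t/q) (s * x p) (s * x r)
     = - (Aop t x r * Aop t (sh q r x) p * Hf q (inverse t) (t/q) (s * x r) (s * x p))"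
proof -
  from assms(2) have g: "x p \<noteq> 0" "x r \<noteq> 0" "x p \<noteq> x r" "x r \<noteq> q * x p" "x p \<noteq> q * x r"
    using assms(1) unfolding generic_pt_def by metis+
  have k: "(t * x p - x r) / (x p - x r) * ((t * x r - q * x p) / (x r - q * x p)) * Hf q (inverse t) (t/q) (s*x p) (s*x r)
       = - ((t * x r - x p) / (x r - x p) * ((t * x p - q * x r) / (x p - q * x r)) * Hf q (inverse t) (t/q) (s*x r) (s*x p))"
    by (rule scalar_key[OF g assms(3,4,5)])
  define P1 where "P1 = (\<Prod>j\<in>UNIV-{p,r}. (t*x p - x j)/(x p - x j))"
  define P2 where "P2 = (\<Prod>j\<in>UNIV-{p,r}. (t*x r - x j)/(x r - x j))"
  have e1: "Aop t x p = (t*x p - x r)/(x p - x r) * P1" unfolding P1_def by (rule Aop_split[OF assms(1)])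
  have e2: "Aop t (sh q p x) r = (t*x r - q*x p)/(x r - q*x p) * P2" unfolding P2_def by (rule Aop_sh_split[OF assms(1)])
  have e3: "Aop t x r = (t*x r - x p)/(x r - x p) * P2" unfolding P2_def
    using Aop_split[of r p t x] assms(1) by (simp add: insert_commute)
  have e4: "Aop t (sh q r x) p = (t*x p - q*x r)/(x p - q*x r) * P1" unfolding P1_def
    using Aop_sh_split[of r p t q x] assms(1) by (simp add: insert_commute)
  show ?thesis unfolding e1 e2 e3 e4
  proof -
    have "(t*x p - x r)/(x p - x r) * P1 * ((t*x r - q*x p)/(x r - q*x p) * P2) * Hf q (inverse t) (t/q) (s * x p) (s * x r)
      = P1 * P2 * ((t * x p - x r) / (x p - x r) * ((t * x r - q * x p) / (x r - q * x p)) * Hf q (inverse t) (t/q) (s*x p) (s*x r))"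
      by (simp only: mult_ac)
    also have "\<dots> = P1 * P2 * (- ((t * x r - x p) / (x r - x p) * ((t * x p - q * x r) / (x p - q * x r)) * Hf q (inverse t) (t/q) (s*x r) (s*x p)))"
      by (simp only: k)
    also have "\<dots> = - ((t*x r - x p)/(x r - x p) * P2 * ((t*x p - q*x r)/(x p - q*x r) * P1) * Hf q (inverse t) (t/q) (s * x r) (s * x p))"
      by (simp only: mult_ac minus_mult_right)
    finally show "(t*x p - x r)/(x p - x r) * P1 * ((t*x r - q*x p)/(x r - q*x p) * P2) * Hf q (inverse t) (t/q) (s * x p) (s * x r)
      = - ((t*x r - x p)/(x r - x p) * P2 * ((t*x p - q*x r)/(x p - q*x r) * P1) * Hf q (inverse t) (t/q) (s * x r) (s * x p))" .
  qed
qed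

theorem mainTheorem8:
  fixes s t :: complex and f :: "'n::finite fn" and x :: "'n \<Rightarrow> complex" and a b :: int
  assumes "s \<noteq> 0" and "s^2 \<noteq> 1" and "t \<noteq> 0"
    and "symmetric_fn f" and "generic_pt (s^2) x"
  shows "(\<Sum>i\<in>{0..3}. \<Sum>j\<in>{0..3}.
            gcoef (s^2) t i j * ecoef s t (a - i) (ecoef s t (b - j) f) x
          + gcoef (s^2) t j i * ecoef s t (b - j) (ecoef s t (a - i) f) x) = 0"
proof -
  define q where "q = s^2"
  have q0: "q \<noteq> 0" using assms(1) by (simp add: q_def)
  define K where "K p r = ((s/(1-s^2))^2 * Aop t x p * Aop t (sh q p x) r * f (sh q r (sh q p x)))" for p r
  define u where "u p = s * x p" for p
  define v where "v p r = s * sh q p x r" for p r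
  define G where "G = gcoef q t"
  define S where "S p r = u p powi a * v p r powi b + u p powi b * v p r powi a" for p r
  have gen: "generic_pt q x" using assms(5) by (simp add: q_def)
  have xnz: "x p \<noteq> 0" for p using gen unfolding generic_pt_def by blast
  have unz: "u p \<noteq> 0" for p using xnz assms(1) by (simp add: u_def)
  have vnz: "v p r \<noteq> 0" for p r using xnz assms(1) q0 by (simp add: v_def sh_def)
  have st: "ecoef s t m (ecoef s t n f) x = (\<Sum>p\<in>UNIV. \<Sum>r\<in>UNIV. K p r * (u p powi m * v p r powi n))" for m n
    unfolding K_def u_def v_def q_def by (rule step1)
  have "(\<Sum>i\<in>{0..3}. \<Sum>j\<in>{0..3}.
            gcoef (s^2) t i j * ecoef s t (a - i) (ecoef s t (b - j) f) x
          + gcoef (s^2) t j i * ecoef s t (b - j) (ecoef s t (a - i) f) x)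
     = (\<Sum>i\<in>{0..3}. \<Sum>j\<in>{0..3}. \<Sum>p\<in>UNIV. \<Sum>r\<in>UNIV.
          K p r * (G i j * (u p powi (a - i) * v p r powi (b - j)) + G j i * (u p powi (b - j) * v p r powi (a - i))))"
    unfolding st G_def q_def[symmetric]
    by (simp add: sum_distrib_left sum.distrib distrib_left mult_ac)
  also have "\<dots> = (\<Sum>p\<in>UNIV. \<Sum>r\<in>UNIV. \<Sum>i\<in>{0..3}. \<Sum>j\<in>{0..3}.
          K p r * (G i j * (u p powi (a - i) * v p r powi (b - j)) + G j i * (u p powi (b - j) * v p r powi (a - i))))"
    by (rule sum4_swap)
  also have "\<dots> = (\<Sum>p\<in>UNIV. \<Sum>r\<in>UNIV. K p r * (S p r * Hf q (inverse t) (t/q) (u p) (v p r)))"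
  proof (intro sum.cong refl)
    fix p r
    have "(\<Sum>i\<in>{0..3}. \<Sum>j\<in>{0..3}.
          K p r * (G i j * (u p powi (a - i) * v p r powi (b - j)) + G j i * (u p powi (b - j) * v p r powi (a - i))))
       = K p r * (\<Sum>i\<in>{0..3}. \<Sum>j\<in>{0..3}.
          (G i j * (u p powi (a - i) * v p r powi (b - j)) + G j i * (u p powi (b - j) * v p r powi (a - i))))"
      by (simp add: sum_distrib_left)
    also have "\<dots> = K p r * (S p r * Hf q (inverse t) (t/q) (u p) (v p r))"
      unfolding G_def gcoef_gc S_def by (simp only: gsum0[OF unz vnz])
    finally show "(\<Sum>i\<in>{0..3}. \<Sum>j\<in>{0..3}.
          K p r * (G i j * (u p powi (a - i) * v p r powi (b - j)) + G j i * (u p powi (b - j) * v p r powi (a - i))))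
       = K p r * (S p r * Hf q (inverse t) (t/q) (u p) (v p r))" .
  qed
  also have "\<dots> = 0"
  proof (rule sum_antisym)
    fix p r
    show "K p r * (S p r * Hf q (inverse t) (t/q) (u p) (v p r)) = - (K r p * (S r p * Hf q (inverse t) (t/q) (u r) (v r p)))"
    proof (cases "p = r")
      case True
      have "Hf q (inverse t) (t/q) (u p) (v p p) = 0"
        using q0 assms(1) xnz[of p] by (simp add: Hf_def u_def v_def sh_def)
      then show ?thesis using True by simp
    next
      case False
      have vv: "v p r = u r" "v r p = u p" using False by (auto simp: u_def v_def sh_def)
      have Ss: "S p r = S r p" unfolding S_def vv by (simp add: algebra_simps)
      have ff: "sh q r (sh q p x) = sh q p (sh q r x)" using False by (simp add: sh_def fun_upd_twist)
      have pk: "Aop t x p * Aop t (sh q p x) r * Hf q (inverse t) (t/q) (u p) (u r)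
     = - (Aop t x r * Aop t (sh q r x) p * Hf q (inverse t) (t/q) (u r) (u p))"
        unfolding u_def by (rule pair_key[OF False gen assms(1,3) q_def])
      define c where "c = (s/(1-s^2))^2 * f (sh q r (sh q p x))"
      have K1: "K p r = c * (Aop t x p * Aop t (sh q p x) r)" unfolding K_def c_def by (simp add: mult_ac)
      have K2: "K r p = c * (Aop t x r * Aop t (sh q r x) p)" unfolding K_def c_def ff by (simp add: mult_ac)
      have "K p r * (S p r * Hf q (inverse t) (t/q) (u p) (v p r))
          = c * S p r * (Aop t x p * Aop t (sh q p x) r * Hf q (inverse t) (t/q) (u p) (u r))"
        unfolding K1 vv by (simp only: mult_ac)
      also have "\<dots> = c * S p r * (- (Aop t x r * Aop t (sh q r x) p * Hf q (inverse t) (t/q) (u r) (u p)))"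
        by (simp only: pk)
      also have "\<dots> = - (K r p * (S r p * Hf q (inverse t) (t/q) (u r) (v r p)))"
        unfolding K2 vv Ss by (simp only: mult_ac minus_mult_right)
      finally show ?thesis .
    qed
  qed
  finally show ?thesis .
qed
end
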